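(* Let $R$ be a commutative ring with unit and let $M\subset\mathbb{M}_R$ be a $\Rightarrow_R$-connected subset. Then for any nonempty subset $M'\subset M$ the homomorphism $\rho^R_{M,M'}\colon R[q]^M\to R[q]^{M'}$ is injective.
   Context: $q$ is an indeterminate. $\mathbb{M}_R$ is the set of monic polynomials in $R[q]$. For $M\subset\mathbb{M}_R$, $M^*$ is the multiplicative set generated by $M$, directed by divisibility, and $R[q]^M=\varprojlim_{f\in M^*}R[q]/(f)$; for $M'\subset M$, $\rho^R_{M,M'}$ is induced by the identity of $R[q]$. For $f,g\in\mathbb{M}_R$ write $f\Rightarrow_R g$ if there exist an ideal $I\subset R$ with $\bigcap_{j\ge0}I^j=(0)$ and $m\ge0$ with $f^m\in(g)+I[q]$. $M$ is $\Rightarrow_R$-connected if $M$ is nonempty and for all $f,f'\in M$ there is a sequence $f=f_0\Rightarrow_R f_1\Rightarrow_R\cdots\Rightarrow_R f_r=f'$ ($r\ge0$) in $M$. *)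

theory Defs
  imports "HOL-Computational_Algebra.Polynomial"
begin

definition monic_poly :: "'a::comm_ring_1 poly \<Rightarrow> bool" where
  "monic_poly f \<longleftrightarrow> lead_coeff f = 1"

definition mult_closure :: "'a::comm_ring_1 poly set \<Rightarrow> 'a poly set" where
  "mult_closure M = {prod_mset F | F. set_mset F \<subseteq> M}"

definition is_ideal :: "'a::comm_ring_1 set \<Rightarrow> bool" where
  "is_ideal I \<longleftrightarrow> 0 \<in> I \<and> (\<forall>x\<in>I. \<forall>y\<in>I. x + y \<in> I) \<and> (\<forall>r x. x \<in> I \<longrightarrow> r * x \<in> I)"

definition ideal_prod :: "'a::comm_ring_1 set \<Rightarrow> 'a set \<Rightarrow> 'a set" where
  "ideal_prod A B = {\<Sum>k<n. a k * b k | (n::nat) a b. \<forall>k<n. a k \<in> A \<and> b k \<in> B}"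

fun ideal_pow :: "'a::comm_ring_1 set \<Rightarrow> nat \<Rightarrow> 'a set" where
  "ideal_pow I 0 = UNIV"
| "ideal_pow I (Suc j) = ideal_prod I (ideal_pow I j)"

definition poly_ext :: "'a::comm_ring_1 set \<Rightarrow> 'a poly set" where
  "poly_ext I = {p. \<forall>i. coeff p i \<in> I}"

definition implies_R :: "'a::comm_ring_1 poly \<Rightarrow> 'a poly \<Rightarrow> bool" where
  "implies_R f g \<longleftrightarrow> (\<exists>I m. is_ideal I \<and> (\<Inter>j. ideal_pow I j) = {0} \<and>
      (\<exists>h p. p \<in> poly_ext I \<and> f ^ m = g * h + p))"

definition implies_connected :: "'a::comm_ring_1 poly set \<Rightarrow> bool" where
  "implies_connected M \<longleftrightarrow> M \<noteq> {} \<and>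
     (\<forall>f\<in>M. \<forall>f'\<in>M. (\<lambda>x y. x \<in> M \<and> y \<in> M \<and> implies_R x y)\<^sup>*\<^sup>* f f')"

text \<open>Elements of R[q]^M = lim_{f in M*} R[q]/(f), represented as compatible families
  (a f)_{f in M*} of polynomials, a f representing a class in R[q]/(f).\<close>
definition in_limit :: "'a::comm_ring_1 poly set \<Rightarrow> ('a poly \<Rightarrow> 'a poly) \<Rightarrow> bool" where
  "in_limit M a \<longleftrightarrow> (\<forall>f\<in>mult_closure M. \<forall>g\<in>mult_closure M. f dvd g \<longrightarrow> f dvd (a g - a f))"

definition limit_eq :: "'a::comm_ring_1 poly set \<Rightarrow> ('a poly \<Rightarrow> 'a poly) \<Rightarrow> ('a poly \<Rightarrow> 'a poly) \<Rightarrow> bool" where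
  "limit_eq M a b \<longleftrightarrow> (\<forall>f\<in>mult_closure M. f dvd (a f - b f))"

text \<open>rho_{M,M'} sends the family a to its restriction to M'*, so injectivity means:
  two elements of R[q]^M with equal images in R[q]^{M'} are equal.\<close>
definition rho_injective :: "'a::comm_ring_1 poly set \<Rightarrow> 'a poly set \<Rightarrow> bool" where
  "rho_injective M M' \<longleftrightarrow> (\<forall>a b. in_limit M a \<longrightarrow> in_limit M b \<longrightarrow> limit_eq M' a b \<longrightarrow> limit_eq M a b)"

end

theory Submission
  imports Defs
begin

lemma ideal_sum:
  assumes "is_ideal K" "\<And>x. x \<in> S \<Longrightarrow> f x \<in> K"
  shows "sum f S \<in> K"
  using assms(2)
proof (induction S rule: infinite_finite_induct)
  case (infinite A) then show ?case using assms(1) by (simp add: is_ideal_def)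
next
  case empty then show ?case using assms(1) by (simp add: is_ideal_def)
next
  case (insert x F) then show ?case using assms(1) by (simp add: is_ideal_def)
qed

lemma ideal_mult_right: "is_ideal K \<Longrightarrow> x \<in> K \<Longrightarrow> x * r \<in> K"
  unfolding is_ideal_def by (metis mult.commute)

lemma ideal_neg: "is_ideal K \<Longrightarrow> x \<in> K \<Longrightarrow> - x \<in> K"
  unfolding is_ideal_def by (metis mult_minus1)

lemma ideal_diff: "is_ideal K \<Longrightarrow> x \<in> K \<Longrightarrow> y \<in> K \<Longrightarrow> x - y \<in> K"
  using ideal_neg[of K y] unfolding is_ideal_def by (metis diff_conv_add_uminus)

lemma ideal_prodI: "\<forall>k<(n::nat). a k \<in> A \<and> b k \<in> B \<Longrightarrow> (\<Sum>k<n. a k * b k) \<in> ideal_prod A B"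
  unfolding ideal_prod_def
  by blast

lemma ideal_prod_ideal:
  assumes "is_ideal A"
  shows "is_ideal (ideal_prod A B)"
  unfolding is_ideal_def
proof (intro conjI ballI allI impI)
  show "0 \<in> ideal_prod A B" unfolding ideal_prod_def
    by (rule CollectI, rule exI[of _ 0]) auto
next
  fix x y assume "x \<in> ideal_prod A B" "y \<in> ideal_prod A B"
  then obtain n1 n2 :: nat and a1 b1 a2 b2 :: "nat \<Rightarrow> 'a" where x: "x = (\<Sum>k<n1. a1 k * b1 k)" "\<forall>k<n1. a1 k \<in> A \<and> b1 k \<in> B"
    and y: "y = (\<Sum>k<n2. a2 k * b2 k)" "\<forall>k<n2. a2 k \<in> A \<and> b2 k \<in> B"
    unfolding ideal_prod_def by (auto simp: mem_Collect_eq)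
  define a where "a k = (if k < n1 then a1 k else a2 (k - n1))" for k
  define b where "b k = (if k < n1 then b1 k else b2 (k - n1))" for k
  have "(\<Sum>k<n1+n2. a k * b k) = (\<Sum>k<n1. a k * b k) + (\<Sum>k=n1..<n1+n2. a k * b k)"
    by (simp add: sum.atLeastLessThan_concat[symmetric] lessThan_atLeast0 )
  also have "(\<Sum>k<n1. a k * b k) = x" unfolding x a_def b_def by simp
  also have "(\<Sum>k=n1..<n1+n2. a k * b k) = (\<Sum>k<n2. a (k + n1) * b (k + n1))"
    using sum.shift_bounds_nat_ivl[of "\<lambda>k. a k * b k" 0 n1 n2]
    by (simp add: lessThan_atLeast0 add.commute)
  also have "\<dots> = y" unfolding y a_def b_def by simp
  finally have "x + y = (\<Sum>k<n1+n2. a k * b k)" by simp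
  moreover have "\<forall>k<n1+n2. a k \<in> A \<and> b k \<in> B" using x y unfolding a_def b_def by auto
  ultimately show "x + y \<in> ideal_prod A B" using ideal_prodI by metis
next
  fix r x assume "x \<in> ideal_prod A B"
  then obtain n :: nat and a b :: "nat \<Rightarrow> 'a" where x: "x = (\<Sum>k<n. a k * b k)" "\<forall>k<n. a k \<in> A \<and> b k \<in> B"
    unfolding ideal_prod_def by (auto simp: mem_Collect_eq)
  have "r * x = (\<Sum>k<n. (r * a k) * b k)" unfolding x by (simp add: sum_distrib_left mult.assoc)
  moreover have "\<forall>k<n. r * a k \<in> A \<and> b k \<in> B" using x assms unfolding is_ideal_def by auto
  ultimately show "r * x \<in> ideal_prod A B" using ideal_prodI[of n "\<lambda>k. r * a k"] by simp
qed

lemma ideal_pow_ideal: "is_ideal I \<Longrightarrow> is_ideal (ideal_pow I j)"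
  by (cases j) (auto simp: ideal_prod_ideal, auto simp: is_ideal_def)

lemma poly_ext_add: "is_ideal K \<Longrightarrow> p \<in> poly_ext K \<Longrightarrow> q \<in> poly_ext K \<Longrightarrow> p + q \<in> poly_ext K"
  unfolding poly_ext_def is_ideal_def by auto

lemma poly_ext_diff: "is_ideal K \<Longrightarrow> p \<in> poly_ext K \<Longrightarrow> q \<in> poly_ext K \<Longrightarrow> p - q \<in> poly_ext K"
  unfolding poly_ext_def using ideal_diff[of K] by auto

lemma poly_ext_mult: "is_ideal K \<Longrightarrow> p \<in> poly_ext K \<Longrightarrow> q * p \<in> poly_ext K"
  unfolding poly_ext_def
  by (auto simp: coeff_mult intro!: ideal_sum) (auto simp: is_ideal_def)

lemma poly_ext_mult2: "is_ideal K \<Longrightarrow> p \<in> poly_ext K \<Longrightarrow> p * q \<in> poly_ext K"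
  using poly_ext_mult by (metis mult.commute)

lemma poly_ext_monom: "is_ideal K \<Longrightarrow> c \<in> K \<Longrightarrow> monom c d \<in> poly_ext K"
  unfolding poly_ext_def is_ideal_def by (auto simp: coeff_monom)

lemma poly_ext_power:
  assumes "is_ideal I" "p \<in> poly_ext I"
  shows "p ^ j \<in> poly_ext (ideal_pow I j)"
proof (induction j)
  case 0 then show ?case by (simp add: poly_ext_def)
next
  case (Suc j)
  show ?case unfolding poly_ext_def
  proof (intro CollectI allI)
    fix i
    have eq: "coeff (p ^ Suc j) i = (\<Sum>k<Suc i. coeff p k * coeff (p ^ j) (i - k))"
      by (simp add: coeff_mult lessThan_Suc_atMost)
    have mem: "\<forall>k<Suc i. coeff p k \<in> I \<and> coeff (p ^ j) (i - k) \<in> ideal_pow I j"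
      using assms(2) Suc by (auto simp: poly_ext_def)
    show "coeff (p ^ Suc j) i \<in> ideal_pow I (Suc j)"
      unfolding ideal_pow.simps eq by (rule ideal_prodI[OF mem])
  qed
qed


lemma binom_split:
  fixes a b :: "'a::comm_semiring_1"
  shows "\<exists>u w. (a + b) ^ (n + j) = a ^ n * u + b ^ j * w"
proof (induction n arbitrary: j)
  case 0
  show ?case by (rule exI[of _ "(a+b)^j"], rule exI[of _ 0]) simp
next
  case (Suc n)
  note outer = Suc.IH
  show ?case
  proof (induction j)
    case 0
    show ?case by (rule exI[of _ 0], rule exI[of _ "(a+b)^Suc n"]) simp
  next
    case (Suc j)
    obtain u w where 1: "(a + b) ^ (n + Suc j) = a ^ n * u + b ^ Suc j * w"
      using outer by blast
    obtain u' w' where 2: "(a + b) ^ (Suc n + j) = a ^ Suc n * u' + b ^ j * w'"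
      using Suc.IH by blast
    have "(a + b) ^ (Suc n + Suc j) = a * (a + b) ^ (n + Suc j) + b * (a + b) ^ (Suc n + j)"
      by (simp add: algebra_simps)
    also have "\<dots> = a ^ Suc n * (u + b * u') + b ^ Suc j * (a * w + w')"
      unfolding 1 2 by (simp add: algebra_simps)
    finally show ?case by blast
  qed
qed

lemma monic_reduce:
  assumes K: "is_ideal K" and F: "lead_coeff F = 1"
    and r: "r = 0 \<or> degree r < degree F"
  shows "w = 0 \<or> degree w < N \<Longrightarrow> r = F * w + v \<Longrightarrow> v \<in> poly_ext K \<Longrightarrow> r \<in> poly_ext K"
proof (induction N arbitrary: w v)
  case 0
  then show ?case by simp
next
  case (Suc N)
  show ?case
  proof (cases "w = 0")
    case True
    then show ?thesis using Suc.prems by simp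
  next
    case False
    define d where "d = degree w"
    define l where "l = lead_coeff w"
    have c1: "coeff (F * w) (degree F + d) = l"
      unfolding d_def l_def using coeff_mult_degree_sum[of F w] F by simp
    have c2: "coeff r (degree F + d) = 0"
      using r by (auto intro: coeff_eq_0)
    have "coeff r (degree F + d) = coeff (F * w) (degree F + d) + coeff v (degree F + d)"
      using Suc.prems(2) by simp
    hence "l = - coeff v (degree F + d)" using c1 c2 by (simp add: eq_neg_iff_add_eq_0)
    hence lK: "l \<in> K" using Suc.prems(3) ideal_neg[OF K] unfolding poly_ext_def by auto
    define w' where "w' = w - monom l d"
    have mK: "F * monom l d \<in> poly_ext K" using poly_ext_mult[OF K poly_ext_monom[OF K lK]] .
    have "r = F * w' + (v + F * monom l d)"
      unfolding w'_def using Suc.prems(2) by (simp add: algebra_simps)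
    moreover have "v + F * monom l d \<in> poly_ext K" using poly_ext_add[OF K Suc.prems(3) mK] .
    moreover have "w' = 0 \<or> degree w' < N"
    proof (cases "w' = 0")
      case False
      have "d < Suc N" using Suc.prems(1) \<open>w \<noteq> 0\<close> d_def by simp
      have "\<forall>k\<ge>d. coeff w' k = 0"
        unfolding w'_def l_def d_def by (auto simp: coeff_monom coeff_eq_0)
      hence "degree w' < d" using False by (intro degree_lessI) auto
      then show ?thesis using \<open>d < Suc N\<close> by simp
    qed simp
    ultimately show ?thesis using Suc.IH by blast
  qed
qed

lemma final_dvd:
  assumes I: "is_ideal I" and Iint: "(\<Inter>j. ideal_pow I j) = {0}"
    and F: "lead_coeff F = 1"
    and H: "\<And>j. \<exists>u v. v \<in> poly_ext (ideal_pow I j) \<and> x = F * u + v"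
  shows "F dvd x"
proof (cases "(1::'a) = 0")
  case True
  then have "\<And>p::'a poly. p = 0" by (metis mult_cancel_left1 smult_1_left smult_0_left)
  then show ?thesis by (metis dvd_0_right)
next
  case False
  then have F0: "F \<noteq> 0" using F by auto
  obtain s r where sr: "pseudo_divmod x F = (s, r)" by (cases "pseudo_divmod x F")
  have xe: "x = F * s + r" using pseudo_divmod(1)[OF F0 sr] F by simp
  have rd: "r = 0 \<or> degree r < degree F" using pseudo_divmod(2)[OF F0 sr] .
  have "\<forall>i. \<forall>j. coeff r i \<in> ideal_pow I j"
  proof (intro allI)
    fix i j
    obtain u v where uv: "v \<in> poly_ext (ideal_pow I j)" "x = F * u + v" using H by blast
    have "r = F * (u - s) + v" using xe uv(2) by (simp add: algebra_simps)
    hence "r \<in> poly_ext (ideal_pow I j)"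
      using monic_reduce[OF ideal_pow_ideal[OF I] F rd, of "u - s" "Suc (degree (u - s))"] uv(1)
      by simp
    then show "coeff r i \<in> ideal_pow I j" unfolding poly_ext_def by simp
  qed
  hence "\<forall>i. coeff r i = 0" using Iint by (metis INT_I singletonD)
  hence "r = 0" by (simp add: poly_eq_iff)
  then show ?thesis using xe by simp
qed


lemma mc_mult: "F \<in> mult_closure M \<Longrightarrow> G \<in> mult_closure M \<Longrightarrow> F * G \<in> mult_closure M"
  unfolding mult_closure_def
proof (clarify)
  fix A B assume "set_mset A \<subseteq> M" "set_mset B \<subseteq> M"
  then show "\<exists>C. prod_mset A * prod_mset B = prod_mset C \<and> set_mset C \<subseteq> M"
    by (intro exI[of _ "A + B"]) auto
qed

lemma mc_one: "1 \<in> mult_closure M"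
  unfolding mult_closure_def by (intro CollectI exI[of _ "{#}"]) auto

lemma mc_elem: "f \<in> M \<Longrightarrow> f \<in> mult_closure M"
  unfolding mult_closure_def by (intro CollectI exI[of _ "{#f#}"]) auto

lemma mc_power: "f \<in> mult_closure M \<Longrightarrow> f ^ k \<in> mult_closure M"
  by (induction k) (auto simp: mc_one mc_mult)

lemma mc_mono: "M' \<subseteq> M \<Longrightarrow> F \<in> mult_closure M' \<Longrightarrow> F \<in> mult_closure M"
  unfolding mult_closure_def by blast

lemma monic_mult:
  fixes p q :: "'a::comm_ring_1 poly"
  assumes "lead_coeff p = 1" "lead_coeff q = 1"
  shows "lead_coeff (p * q) = 1"
proof (cases "(1::'a) = 0")
  case True then show ?thesis by (metis mult_1 mult_zero_left)
next
  case False
  have c: "coeff (p * q) (degree p + degree q) = 1"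
    using coeff_mult_degree_sum[of p q] assms by simp
  hence "degree p + degree q \<le> degree (p * q)" using False by (intro le_degree) simp
  hence "degree (p * q) = degree p + degree q" using degree_mult_le[of p q] by simp
  then show ?thesis using c by simp
qed

lemma mc_monic:
  assumes "\<forall>f\<in>M. monic_poly f" "F \<in> mult_closure M"
  shows "lead_coeff F = 1"
proof -
  obtain A where A: "F = prod_mset A" "set_mset A \<subseteq> M" using assms(2) unfolding mult_closure_def by blast
  have "lead_coeff (prod_mset A) = 1" using A(2)
  proof (induction A)
    case empty then show ?case by simp
  next
    case (add x A)
    then show ?case using assms(1) monic_mult[of x "prod_mset A"] by (auto simp: monic_poly_def)
  qed
  then show ?thesis using A by simp
qed

lemma transfer_step:
  assumes Mon: "\<forall>f\<in>M. monic_poly f"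
    and c: "in_limit M c"
    and G: "G \<in> mult_closure M" and fM: "f \<in> M" and gM: "g \<in> M"
    and fg: "implies_R f g"
    and Pf: "\<forall>k. G * f ^ k dvd c (G * f ^ k)"
  shows "G * g ^ n dvd c (G * g ^ n)"
proof -
  obtain I m h p where I: "is_ideal I" "(\<Inter>j. ideal_pow I j) = {0}"
    and p: "p \<in> poly_ext I" and fm: "f ^ m = g * h + p"
    using fg unfolding implies_R_def by blast
  let ?F = "G * g ^ n"
  let ?x = "c ?F"
  have FM: "?F \<in> mult_closure M" using G gM by (simp add: mc_mult mc_power mc_elem)
  have "?F dvd ?x"
  proof (rule final_dvd[OF I])
    show "lead_coeff ?F = 1" using mc_monic[OF Mon FM] .
  next
    fix j
    obtain u w where uw: "(g * h + p) ^ (n + j) = (g * h) ^ n * u + p ^ j * w"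
      using binom_split by blast
    define k where "k = m * (n + j)"
    have fk: "f ^ k = g ^ n * (h ^ n * u) + p ^ j * w"
      unfolding k_def power_mult fm uw by (simp add: power_mult_distrib algebra_simps)
    have pj: "p ^ j * w \<in> poly_ext (ideal_pow I j)"
      using poly_ext_mult2[OF ideal_pow_ideal[OF I(1)] poly_ext_power[OF I(1) p]] .
    let ?A = "G * f ^ k"
    let ?Phi = "G * f ^ k * g ^ n"
    have AM: "?A \<in> mult_closure M" using G fM by (simp add: mc_mult mc_power mc_elem)
    have PhiM: "?Phi \<in> mult_closure M" using AM gM by (simp add: mc_mult mc_power mc_elem)
    have "?A dvd c ?Phi - c ?A" using c AM PhiM unfolding in_limit_def by auto
    hence "?A dvd c ?Phi" using Pf by (metis dvd_diff_commute dvd_add_right_iff diff_add_cancel)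
    then obtain s where s: "c ?Phi = ?A * s" by blast
    have "?F dvd ?Phi" by (rule dvdI[of _ _ "f ^ k"]) (simp add: mult_ac)
    hence "?F dvd c ?Phi - ?x" using c FM PhiM unfolding in_limit_def by blast
    then obtain t where t: "c ?Phi - ?x = ?F * t" by blast
    have "?x = ?A * s - ?F * t" using s t by (simp add: algebra_simps)
    also have "\<dots> = ?F * (h ^ n * u * s - t) + G * (p ^ j * w) * s"
      unfolding fk by (simp add: algebra_simps)
    finally have "?x = ?F * (h ^ n * u * s - t) + G * (p ^ j * w) * s" .
    moreover have "G * (p ^ j * w) * s \<in> poly_ext (ideal_pow I j)"
      using poly_ext_mult[OF ideal_pow_ideal[OF I(1)] pj, of G] poly_ext_mult2[OF ideal_pow_ideal[OF I(1)]]
      by blast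
    ultimately show "\<exists>u v. v \<in> poly_ext (ideal_pow I j) \<and> ?x = ?F * u + v" by blast
  qed
  then show ?thesis .
qed


lemma transfer_chain:
  assumes Mon: "\<forall>f\<in>M. monic_poly f"
    and c: "in_limit M c"
    and G: "G \<in> mult_closure M"
    and ch: "(\<lambda>x y. x \<in> M \<and> y \<in> M \<and> implies_R x y)\<^sup>*\<^sup>* f g"
    and fM: "f \<in> M"
    and Pf: "\<forall>k. G * f ^ k dvd c (G * f ^ k)"
  shows "g \<in> M \<and> (\<forall>n. G * g ^ n dvd c (G * g ^ n))"
  using ch
proof (induction rule: rtranclp_induct)
  case base then show ?case using fM Pf by simp
next
  case (step y z)
  then show ?case using transfer_step[OF Mon c G, of y z] by blast
qed

theorem corollary3p5:
  fixes M M' :: "'a::comm_ring_1 poly set"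
  assumes "\<forall>f\<in>M. monic_poly f"
    and "implies_connected M"
    and "M' \<subseteq> M" and "M' \<noteq> {}"
  shows "rho_injective M M'"
  unfolding rho_injective_def
proof (intro allI impI)
  fix a b assume a: "in_limit M a" and b: "in_limit M b" and ab: "limit_eq M' a b"
  define c where "c F = a F - b F" for F
  have c: "in_limit M c" unfolding in_limit_def
  proof (intro ballI impI)
    fix F G assume "F \<in> mult_closure M" "G \<in> mult_closure M" "F dvd G"
    then have "F dvd (a G - a F) - (b G - b F)" using a b unfolding in_limit_def by (blast intro: dvd_diff)
    moreover have "(a G - a F) - (b G - b F) = c G - c F" unfolding c_def by (simp add: algebra_simps)
    ultimately show "F dvd c G - c F" by simp
  qed
  obtain f0 where f0: "f0 \<in> M'" using assms(4) by blast
  have f0M: "f0 \<in> M" using f0 assms(3) by blast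
  have conn: "\<And>f g. f \<in> M \<Longrightarrow> g \<in> M \<Longrightarrow> (\<lambda>x y. x \<in> M \<and> y \<in> M \<and> implies_R x y)\<^sup>*\<^sup>* f g"
    using assms(2) unfolding implies_connected_def by blast
  have main: "set_mset A \<subseteq> M \<Longrightarrow> \<forall>k. prod_mset A * f0 ^ k dvd c (prod_mset A * f0 ^ k)" for A
  proof (induction A)
    case empty
    show ?case
    proof
      fix k
      have "f0 ^ k \<in> mult_closure M'" using mc_power[OF mc_elem[OF f0]] .
      then show "prod_mset {#} * f0 ^ k dvd c (prod_mset {#} * f0 ^ k)"
        using ab unfolding limit_eq_def c_def by simp
    qed
  next
    case (add g A)
    have gM: "g \<in> M" and AM: "set_mset A \<subseteq> M" using add.prems by auto
    have GA: "prod_mset A \<in> mult_closure M" using AM unfolding mult_closure_def by blast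
    have "\<forall>n. prod_mset A * g ^ n dvd c (prod_mset A * g ^ n)"
      using transfer_chain[OF assms(1) c GA conn[OF f0M gM] f0M] add.IH[OF AM] by blast
    hence "\<forall>n. (prod_mset A * g) * g ^ n dvd c ((prod_mset A * g) * g ^ n)"
      by (metis mult.assoc power_Suc)
    moreover have GAg: "prod_mset A * g \<in> mult_closure M" using GA gM by (simp add: mc_mult mc_elem)
    ultimately have "\<forall>k. (prod_mset A * g) * f0 ^ k dvd c ((prod_mset A * g) * f0 ^ k)"
      using transfer_chain[OF assms(1) c GAg conn[OF gM f0M] gM] by blast
    then show ?case by (simp add: mult_ac)
  qed
  show "limit_eq M a b" unfolding limit_eq_def
  proof
    fix F assume "F \<in> mult_closure M"
    then obtain A where A: "F = prod_mset A" "set_mset A \<subseteq> M" unfolding mult_closure_def by blast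
    show "F dvd a F - b F" using main[OF A(2)] A(1) unfolding c_def by (metis mult_1_right power_0)
  qed
qed

end
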